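(* Let $\texttt{ALG}$ be an online non-preemptive scheduler for the serial-parallel scheduling problem on $p$ processors, fix a constant $c>0$, and let $R\in\mathbb{N}$. Then there exists a task arrival process $\mathcal{T}$ on which the competitive ratio of $\texttt{ALG}$ with $c$ speed augmentation for mean response time is $\Omega(R)$, i.e., $\mathrm{TRT}^{\mathcal{T}}_{\texttt{ALG}}\ge\Omega(R)\cdot\mathrm{TRT}^{c\cdot\mathcal{T}}_{\texttt{OPT}}$. In particular $\texttt{ALG}$ can perform arbitrarily worse than $\texttt{OPT}$.
   Context: Serial-parallel scheduling problem: $p$ identical processors. A task arrival process is a finite set of tasks $\tau_i=(\sigma_i,\pi_i,t_i)$, $i=1,\dots,n$, with arrival time $t_i\ge0$, serial work $\sigma_i\ge0$ and parallel work $\pi_i$, with $1\le\pi_i/\sigma_i\le p$ when $\sigma_i>0$. A task is performed either by its serial job (work $\sigma_i$, at most one processor at any instant) or by its parallel job (work $\pi_i$, any number of processors, rate equal to number of processors); time is continuous. A scheduler is non-preemptive if the number of processors it assigns to each task is fixed for the full duration during which the task executes. Total response time $\mathrm{TRT}=\sum_i(f_i-t_i)$ with $f_i$ the completion time; mean response time is $\mathrm{TRT}/n$. $\mathrm{TRT}^{\mathcal{T}}_{\texttt{OPT}}$ is the optimal offline (preemptive) total response time. For $c>0$, $c\cdot\mathcal{T}$ is $\mathcal{T}$ with all works multiplied by $c$; comparing $\mathrm{TRT}_{\texttt{ALG}}^{\mathcal{T}}$ with $\mathrm{TRT}_{\texttt{OPT}}^{c\cdot\mathcal{T}}$ means $\texttt{ALG}$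 has $c$ speed augmentation. Competitive ratio here is worst-case. *)

theory Defs
  imports "HOL-Analysis.Analysis"
begin

type_synonym task = "real \<times> real \<times> real"

definition ser :: "task \<Rightarrow> real" where "ser \<tau> = fst \<tau>"
definition par :: "task \<Rightarrow> real" where "par \<tau> = fst (snd \<tau>)"
definition arr :: "task \<Rightarrow> real" where "arr \<tau> = snd (snd \<tau>)"

definition valid_task :: "nat \<Rightarrow> task \<Rightarrow> bool" where
  "valid_task p \<tau> \<longleftrightarrow> arr \<tau> \<ge> 0 \<and> ser \<tau> \<ge> 0 \<and> par \<tau> \<ge> 0 \<and>
     (ser \<tau> > 0 \<longrightarrow> 1 \<le> par \<tau> / ser \<tau> \<and> par \<tau> / ser \<tau> \<le> real p)"

definition valid_instance :: "nat \<Rightarrow> task list \<Rightarrow> bool" where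
  "valid_instance p T \<longleftrightarrow> (\<forall>\<tau>\<in>set T. valid_task p \<tau>)"

definition scale :: "real \<Rightarrow> task list \<Rightarrow> task list" where
  "scale c T = map (\<lambda>(s, q, t). (c * s, c * q, t)) T"

definition work :: "task \<Rightarrow> bool \<Rightarrow> real" where
  "work \<tau> b = (if b then par \<tau> else ser \<tau>)"

text \<open>A (general, possibly preemptive) schedule: job choice m, processor
  allocation a i t (number of processors given to task i at time t),
  and completion times f.\<close>
definition feasible_sched ::
  "nat \<Rightarrow> task list \<Rightarrow> (nat \<Rightarrow> bool) \<Rightarrow> (nat \<Rightarrow> real \<Rightarrow> nat) \<Rightarrow> (nat \<Rightarrow> real) \<Rightarrow> bool" where
  "feasible_sched p T m a f \<longleftrightarrow>
     (\<forall>i<length T.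
        arr (T!i) \<le> f i \<and>
        (\<forall>t. a i t > 0 \<longrightarrow> arr (T!i) \<le> t \<and> t < f i) \<and>
        (\<not> m i \<longrightarrow> (\<forall>t. a i t \<le> 1)) \<and>
        ((\<lambda>t. real (a i t)) has_integral work (T!i) (m i)) {arr (T!i)..f i}) \<and>
     (\<forall>t. (\<Sum>i<length T. a i t) \<le> p)"

definition TRT :: "task list \<Rightarrow> (nat \<Rightarrow> real) \<Rightarrow> real" where
  "TRT T f = (\<Sum>i<length T. f i - arr (T!i))"

definition TRT_OPT :: "nat \<Rightarrow> task list \<Rightarrow> real" where
  "TRT_OPT p T = Inf {TRT T f | m a f. feasible_sched p T m a f}"

text \<open>A non-preemptive schedule assigns to each task a decision
  (parallel job?, number of processors k, start time s); the task then runs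
  on exactly k processors during [s, s + work/k).\<close>
type_synonym np_sched = "nat \<Rightarrow> bool \<times> nat \<times> real"

definition np_par :: "bool \<times> nat \<times> real \<Rightarrow> bool" where "np_par d = fst d"
definition np_procs :: "bool \<times> nat \<times> real \<Rightarrow> nat" where "np_procs d = fst (snd d)"
definition np_start :: "bool \<times> nat \<times> real \<Rightarrow> real" where "np_start d = snd (snd d)"

definition np_finish :: "task list \<Rightarrow> np_sched \<Rightarrow> nat \<Rightarrow> real" where
  "np_finish T d i = np_start (d i) + work (T!i) (np_par (d i)) / real (np_procs (d i))"

definition np_alloc :: "task list \<Rightarrow> np_sched \<Rightarrow> nat \<Rightarrow> real \<Rightarrow> nat" where
  "np_alloc T d i t =
     (if np_start (d i) \<le> t \<and> t < np_finish T d i then np_procs (d i) else 0)"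

definition feasible_np :: "nat \<Rightarrow> task list \<Rightarrow> np_sched \<Rightarrow> bool" where
  "feasible_np p T d \<longleftrightarrow>
     (\<forall>i<length T.
        arr (T!i) \<le> np_start (d i) \<and>
        1 \<le> np_procs (d i) \<and>
        (\<not> np_par (d i) \<longrightarrow> np_procs (d i) = 1)) \<and>
     (\<forall>t. (\<Sum>i<length T. np_alloc T d i t) \<le> p)"

definition TRT_np :: "task list \<Rightarrow> np_sched \<Rightarrow> real" where
  "TRT_np T d = TRT T (np_finish T d)"

definition arrived :: "task list \<Rightarrow> real \<Rightarrow> nat set" where
  "arrived T t = {i. i < length T \<and> arr (T!i) \<le> t}"

text \<open>Online: any decision that takes effect by time t (the task has started by t)
  depends only on the tasks that have arrived by time t.\<close>
definition online :: "nat \<Rightarrow> (task list \<Rightarrow> np_sched) \<Rightarrow> bool" where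
  "online p ALG \<longleftrightarrow>
     (\<forall>T T' t. valid_instance p T \<longrightarrow> valid_instance p T' \<longrightarrow>
        arrived T t = arrived T' t \<longrightarrow>
        (\<forall>i\<in>arrived T t. T'!i = T!i) \<longrightarrow>
        (\<forall>i\<in>arrived T t. (np_start (ALG T i) \<le> t \<or> np_start (ALG T' i) \<le> t)
             \<longrightarrow> ALG T' i = ALG T i))"

definition online_np_scheduler :: "nat \<Rightarrow> (task list \<Rightarrow> np_sched) \<Rightarrow> bool" where
  "online_np_scheduler p ALG \<longleftrightarrow>
     online p ALG \<and> (\<forall>T. valid_instance p T \<longrightarrow> feasible_np p T (ALG T))"

end

theory Submission
  imports Defs
begin

lemma scale_nth:
  assumes "i < length T"
  shows "ser (scale c T ! i) = c * ser (T ! i)" "par (scale c T ! i) = c * par (T ! i)"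
        "arr (scale c T ! i) = arr (T ! i)"
  using assms by (auto simp: scale_def ser_def par_def arr_def split: prod.splits)

lemma length_scale [simp]: "length (scale c T) = length T"
  by (simp add: scale_def)

lemma valid_scale:
  assumes "valid_instance p T" "c > 0"
  shows "valid_instance p (scale c T)"
  unfolding valid_instance_def
proof
  fix x assume "x \<in> set (scale c T)"
  then obtain i where i: "i < length T" "x = scale c T ! i"
    by (metis in_set_conv_nth length_scale)
  have v: "valid_task p (T ! i)" using assms(1) i(1) by (simp add: valid_instance_def)
  have e: "c * par (T ! i) / (c * ser (T ! i)) = par (T ! i) / ser (T ! i)"
    using assms(2) by simp
  show "valid_task p x" using v i assms(2) scale_nth[OF i(1), of c] e
    by (auto simp: valid_task_def zero_less_mult_iff)
qed

lemma indicator_integral: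
  fixes s F A :: real and k :: real
  assumes "A \<le> s" "s \<le> F"
  shows "((\<lambda>t. if s \<le> t \<and> t < F then k else 0) has_integral k * (F - s)) {A..F}"
proof -
  have "((\<lambda>t. k) has_integral k * (F - s)) (cbox s F)"
    using has_integral_const_real[of k s F] assms by (simp add: mult.commute)
  then have "((\<lambda>t. if t \<in> cbox s F then k else 0) has_integral k * (F - s)) (cbox A F)"
    by (rule has_integral_restrict_closed_subinterval) (use assms in auto)
  then have h: "((\<lambda>t. if t \<in> {s..F} then k else 0) has_integral k * (F - s)) {A..F}" by simp
  show ?thesis
    by (rule has_integral_spike_finite_eq[of "{F}", THEN iffD1, OF _ _ h]) auto
qed

lemma np_to_sched:
  assumes "valid_instance p T" "feasible_np p T d"
  shows "feasible_sched p T (\<lambda>i. np_par (d i)) (np_alloc T d) (np_finish T d)"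
  unfolding feasible_sched_def
proof (rule conjI[rotated])
  show "\<forall>t. (\<Sum>i<length T. np_alloc T d i t) \<le> p" using assms(2) by (simp add: feasible_np_def)
next
  show "\<forall>i<length T. arr (T ! i) \<le> np_finish T d i \<and>
        (\<forall>t. 0 < np_alloc T d i t \<longrightarrow> arr (T ! i) \<le> t \<and> t < np_finish T d i) \<and>
        (\<not> np_par (d i) \<longrightarrow> (\<forall>t. np_alloc T d i t \<le> 1)) \<and>
        ((\<lambda>t. real (np_alloc T d i t)) has_integral work (T ! i) (np_par (d i))) {arr (T ! i)..np_finish T d i}"
  proof (intro allI impI)
  fix i assume i: "i < length T"
  have v: "valid_task p (T ! i)" using assms(1) i by (simp add: valid_instance_def)
  have f: "arr (T!i) \<le> np_start (d i)" "1 \<le> np_procs (d i)" "\<not> np_par (d i) \<longrightarrow> np_procs (d i) = 1"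
    using assms(2) i by (auto simp: feasible_np_def)
  have w: "work (T!i) (np_par (d i)) \<ge> 0" using v by (simp add: work_def valid_task_def)
  have F: "np_start (d i) \<le> np_finish T d i" using w f(2) by (simp add: np_finish_def)
  have A: "arr (T ! i) \<le> np_finish T d i" using F f(1) by simp
  have B: "\<forall>t. 0 < np_alloc T d i t \<longrightarrow> arr (T ! i) \<le> t \<and> t < np_finish T d i"
    using f(1) by (auto simp: np_alloc_def split: if_splits)
  have C: "\<not> np_par (d i) \<longrightarrow> (\<forall>t. np_alloc T d i t \<le> 1)"
    using f(3) by (auto simp: np_alloc_def)
  have eq: "(\<lambda>t. real (np_alloc T d i t)) = (\<lambda>t. if np_start (d i) \<le> t \<and> t < np_finish T d i then real (np_procs (d i)) else 0)"
    by (auto simp: np_alloc_def)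
  have k: "real (np_procs (d i)) * (np_finish T d i - np_start (d i)) = work (T!i) (np_par (d i))"
    using f(2) by (simp add: np_finish_def)
  have D: "((\<lambda>t. real (np_alloc T d i t)) has_integral work (T ! i) (np_par (d i))) {arr (T ! i)..np_finish T d i}"
    unfolding eq k[symmetric] by (rule indicator_integral) (use f(1) F in auto)
  show "arr (T ! i) \<le> np_finish T d i \<and>
        (\<forall>t. 0 < np_alloc T d i t \<longrightarrow> arr (T ! i) \<le> t \<and> t < np_finish T d i) \<and>
        (\<not> np_par (d i) \<longrightarrow> (\<forall>t. np_alloc T d i t \<le> 1)) \<and>
        ((\<lambda>t. real (np_alloc T d i t)) has_integral work (T ! i) (np_par (d i))) {arr (T ! i)..np_finish T d i}"
    using A B C D by blast
  qed
qed

lemma sched_lower: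
  assumes "feasible_sched p T m a f" "i < length T"
  shows "work (T!i) (m i) \<le> real p * (f i - arr (T!i))"
proof -
  have fi: "arr (T!i) \<le> f i" and I: "((\<lambda>t. real (a i t)) has_integral work (T ! i) (m i)) {arr (T ! i)..f i}"
    using assms by (auto simp: feasible_sched_def)
  have le: "real (a i t) \<le> real p" for t
  proof -
    have "a i t \<le> (\<Sum>j<length T. a j t)" using assms(2) by (intro member_le_sum) auto
    also have "\<dots> \<le> p" using assms(1) by (simp add: feasible_sched_def)
    finally show ?thesis by simp
  qed
  have "((\<lambda>t. real p) has_integral real p * (f i - arr (T!i))) {arr (T ! i)..f i}"
    using has_integral_const_real[of "real p" "arr (T!i)" "f i"] fi by (simp add: mult.commute)
  from has_integral_le[OF I this] le show ?thesis by blast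
qed

lemma TRT_ge_term:
  assumes "feasible_sched p T m a f" "i < length T"
  shows "f i - arr (T!i) \<le> TRT T f"
  unfolding TRT_def
  by (rule member_le_sum[of i "{..<length T}" "\<lambda>i. f i - arr (T!i)"])
     (use assms in \<open>auto simp: feasible_sched_def\<close>)

lemma TRT_np_ge:
  assumes "feasible_np p T d" "S \<subseteq> {..<length T}" "valid_instance p T"
  shows "(\<Sum>i\<in>S. np_finish T d i - arr (T!i)) \<le> TRT_np T d"
  unfolding TRT_np_def TRT_def
proof (rule sum_mono2)
  fix i assume "i \<in> {..<length T} - S"
  then have "i < length T" by auto
  then have "arr (T!i) \<le> np_start (d i)" "1 \<le> np_procs (d i)" "valid_task p (T!i)"
    using assms(1,3) by (auto simp: feasible_np_def valid_instance_def)
  then show "0 \<le> np_finish T d i - arr (T!i)"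
    by (auto simp: np_finish_def work_def valid_task_def intro!: add_increasing2)
qed (use assms in auto)

lemma seq_sum:
  assumes "\<forall>i<n. np_procs (d i) = 1"
    "\<forall>i<n. \<forall>i'<n. i \<noteq> i' \<longrightarrow> np_finish T d i \<le> np_start (d i') \<or> np_finish T d i' \<le> np_start (d i)"
  shows "(\<Sum>i<n. np_alloc T d i t) \<le> 1"
proof -
  let ?A = "{i. i < n \<and> np_start (d i) \<le> t \<and> t < np_finish T d i}"
  have "(\<Sum>i<n. np_alloc T d i t) = (\<Sum>i<n. if i \<in> ?A then 1 else 0)"
    using assms(1) by (intro sum.cong) (auto simp: np_alloc_def)
  also have "\<dots> = card ?A"
    by (simp add: sum.If_cases Int_def)
  also have "card ?A \<le> Suc 0"
  proof (subst card_le_Suc0_iff_eq)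
    show "finite ?A" by simp
    show "\<forall>a1\<in>?A. \<forall>a2\<in>?A. a1 = a2"
      using assms(2) by force
  qed
  finally show ?thesis by simp
qed

lemma lin_step:
  fixes x M w :: real
  assumes "i < i'" "0 \<le> M" "w \<le> M"
  shows "x + real i * M + w \<le> x + real i' * M"
proof -
  have "real i + 1 \<le> real i'" using assms(1) by simp
  then have "(real i + 1) * M \<le> real i' * M" using assms(2) by (rule mult_right_mono)
  then show ?thesis using assms(3) by (simp add: algebra_simps)
qed

lemma max_busy:
  assumes "online_np_scheduler p ALG"
  obtains T0 t1 where "valid_instance p T0" "t1 \<ge> 0"
    "\<And>T t. valid_instance p T \<Longrightarrow> t \<ge> 0 \<Longrightarrow>
       (\<Sum>i<length T. np_alloc T (ALG T) i t) \<le> (\<Sum>i<length T0. np_alloc T0 (ALG T0) i t1)"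
proof -
  let ?S = "{(\<Sum>i<length T. np_alloc T (ALG T) i t) | T t. valid_instance p T \<and> t \<ge> 0}"
  have sub: "?S \<subseteq> {..p}"
    using assms by (auto simp: online_np_scheduler_def feasible_np_def)
  then have fin: "finite ?S" by (rule finite_subset) simp
  have ne: "?S \<noteq> {}"
  proof -
    have "valid_instance p []" by (simp add: valid_instance_def)
    then have "(\<Sum>i<length []. np_alloc [] (ALG []) i 0) \<in> ?S" by (intro CollectI exI[of _ "[]"] exI[of _ 0]) auto
    then show ?thesis by (metis empty_iff)
  qed
  have "Max ?S \<in> ?S" using fin ne by (rule Max_in)
  then obtain T0 t1 where T0: "valid_instance p T0" "t1 \<ge> 0"
    "Max ?S = (\<Sum>i<length T0. np_alloc T0 (ALG T0) i t1)" by blast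
  show ?thesis
  proof (rule that[OF T0(1,2)])
    fix T t assume "valid_instance p T" "t \<ge> (0::real)"
    then have "(\<Sum>i<length T. np_alloc T (ALG T) i t) \<in> ?S" by (intro CollectI exI[of _ T] exI[of _ t]) auto
    then have "(\<Sum>i<length T. np_alloc T (ALG T) i t) \<le> Max ?S" using fin by (rule Max_ge[rotated])
    then show "(\<Sum>i<length T. np_alloc T (ALG T) i t) \<le> (\<Sum>i<length T0. np_alloc T0 (ALG T0) i t1)"
      using T0(3) by simp
  qed
qed

theorem proposition9p2:
  fixes p :: nat and c :: real and ALG :: "task list \<Rightarrow> np_sched"
  assumes "p \<ge> 1" and "c > 0" and "online_np_scheduler p ALG"
  shows "\<exists>K>0. \<forall>R::nat. \<exists>T. valid_instance p T \<and> TRT_OPT p (scale c T) > 0 \<and>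
            TRT_np T (ALG T) \<ge> K * real R * TRT_OPT p (scale c T)"
proof -
  note p1 = assms(1) and cpos = assms(2)
  have onl: "online p ALG" and feas: "\<And>T. valid_instance p T \<Longrightarrow> feasible_np p T (ALG T)"
    using assms(3) by (auto simp: online_np_scheduler_def)
  obtain T0 t1 where v0: "valid_instance p T0" and t1: "t1 \<ge> 0" and
    mx: "\<And>T t. valid_instance p T \<Longrightarrow> t \<ge> 0 \<Longrightarrow>
       (\<Sum>i<length T. np_alloc T (ALG T) i t) \<le> (\<Sum>i<length T0. np_alloc T0 (ALG T0) i t1)"
    using max_busy[OF assms(3)] by blast
  define n0 where "n0 = length T0"
  define j where "j = (\<Sum>i<n0. np_alloc T0 (ALG T0) i t1)"
  define R1 where "R1 = {i. i < n0 \<and> 0 < np_alloc T0 (ALG T0) i t1}"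
  define d where "d = Min ((\<lambda>i. np_finish T0 (ALG T0) i - t1) ` R1 \<union> {1})"
  have finR1: "finite R1" by (simp add: R1_def)
  have R1prop: "np_start (ALG T0 i) \<le> t1 \<and> t1 < np_finish T0 (ALG T0) i \<and>
      np_alloc T0 (ALG T0) i t1 = np_procs (ALG T0 i)" if "i \<in> R1" for i
    using that by (auto simp: R1_def np_alloc_def split: if_splits)
  have dpos: "d > 0"
    unfolding d_def using finR1 R1prop by (subst Min_gr_iff) auto
  have dle: "t1 + d \<le> np_finish T0 (ALG T0) i" if "i \<in> R1" for i
  proof -
    have "d \<le> np_finish T0 (ALG T0) i - t1" unfolding d_def using finR1 that by (intro Min_le) auto
    then show ?thesis by simp
  qed
  define a where "a = t1 + d / 2"
  have apos: "a > 0" using t1 dpos by (simp add: a_def)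
  define B where "B = a + 1 + (\<Sum>i<n0. arr (T0!i))"
  define M where "M = 1 + c * (\<Sum>i<n0. ser (T0!i))"
  define C0 where "C0 = (\<Sum>i<n0. B + real i * M + c * ser (T0!i) - arr (T0!i))"
  have vt0: "valid_task p (T0!i)" if "i < n0" for i using v0 that by (simp add: valid_instance_def n0_def)
  have arr_le_B: "arr (T0!i) \<le> B" if "i < n0" for i
  proof -
    have "arr (T0!i) \<le> (\<Sum>i<n0. arr (T0!i))"
      using that vt0 by (intro member_le_sum) (auto simp: valid_task_def)
    then show ?thesis using apos by (simp add: B_def)
  qed
  have ser_le_M: "c * ser (T0!i) \<le> M" "0 \<le> c * ser (T0!i)" if "i < n0" for i
  proof -
    have "ser (T0!i) \<le> (\<Sum>i<n0. ser (T0!i))"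
      using that vt0 by (intro member_le_sum) (auto simp: valid_task_def)
    then have "c * ser (T0!i) \<le> c * (\<Sum>i<n0. ser (T0!i))" using cpos by (intro mult_left_mono) auto
    then show "c * ser (T0!i) \<le> M" by (simp add: M_def)
    show "0 \<le> c * ser (T0!i)" using vt0[OF that] cpos by (simp add: valid_task_def)
  qed
  have Mpos: "M > 0"
  proof -
    have "0 \<le> (\<Sum>i<n0. ser (T0!i))" using vt0 by (intro sum_nonneg) (auto simp: valid_task_def)
    then have "0 \<le> c * (\<Sum>i<n0. ser (T0!i))" using cpos by simp
    then show ?thesis by (simp add: M_def)
  qed
  show ?thesis
  proof (intro exI[of _ 1] conjI allI)
    fix R :: nat
    define N where "N = nat \<lceil>2 * real R * (C0 + 1) / d\<rceil> + 1"
    have N1: "N \<ge> 1" by (simp add: N_def)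
    have Nbig: "2 * real R * (C0 + 1) / d \<le> real N" unfolding N_def by linarith
    define h where "h = 1 / (real N)^2"
    have hpos: "h > 0" using N1 by (simp add: h_def)
    have Nh: "real N * h \<le> 1" using N1 by (simp add: h_def power2_eq_square)
    have NNh: "real N * (real N * h) = 1" using N1 by (simp add: h_def power2_eq_square)
    define \<delta> where "\<delta> = h / c"
    have dlpos: "\<delta> > 0" using hpos cpos by (simp add: \<delta>_def)
    have cdl: "c * \<delta> = h" using cpos by (simp add: \<delta>_def)
    define T' where "T' = T0 @ replicate N (\<delta>, \<delta>, a)"
    have lenT': "length T' = n0 + N" by (simp add: T'_def n0_def)
    have nth0: "T'!i = T0!i" if "i < n0" for i using that by (simp add: T'_def n0_def nth_append)
    have nth1: "T'!i = (\<delta>, \<delta>, a)" if "n0 \<le> i" "i < n0 + N" for i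
      using that by (simp add: T'_def n0_def nth_append)
    have vtiny: "valid_task p (\<delta>, \<delta>, a)"
      using dlpos apos p1 by (simp add: valid_task_def ser_def par_def arr_def)
    have vT': "valid_instance p T'"
      using v0 vtiny by (auto simp: T'_def valid_instance_def)
    have arrv: "arrived T' t1 = arrived T0 t1"
    proof -
      have "i < n0" if "i < n0 + N" "arr (T'!i) \<le> t1" for i
      proof (rule ccontr)
        assume "\<not> i < n0"
        then have "arr (T'!i) = a" using nth1 that(1) by (simp add: arr_def)
        then show False using that(2) dpos by (simp add: a_def)
      qed
      then show ?thesis unfolding arrived_def lenT' n0_def[symmetric] using nth0 by (auto, metis)
    qed
    have same: "ALG T' i = ALG T0 i" if "i \<in> R1" for i
    proof -
      have i0: "i < n0" using that by (simp add: R1_def)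
      have "arr (T0!i) \<le> np_start (ALG T0 i)" using feas[OF v0] i0 by (simp add: feasible_np_def n0_def)
      then have ia: "i \<in> arrived T0 t1" using R1prop[OF that] i0 by (simp add: arrived_def n0_def)
      have "\<forall>i\<in>arrived T0 t1. T'!i = T0!i" using nth0 by (simp add: arrived_def n0_def)
      then show ?thesis using onl v0 vT' arrv ia R1prop[OF that] unfolding online_def by metis
    qed
    have samefin: "np_finish T' (ALG T') i = np_finish T0 (ALG T0) i" if "i \<in> R1" for i
      using same[OF that] nth0 that by (simp add: np_finish_def R1_def)
    have block: "t1 + d \<le> np_start (ALG T' q)" if "n0 \<le> q" "q < n0 + N" for q
    proof (rule ccontr)
      assume "\<not> t1 + d \<le> np_start (ALG T' q)"
      define s where "s = np_start (ALG T' q)"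
      have slt: "s < t1 + d" using \<open>\<not> _\<close> by (simp add: s_def)
      have fq: "arr (T'!q) \<le> s" "1 \<le> np_procs (ALG T' q)"
        using feas[OF vT'] that by (auto simp: feasible_np_def lenT' s_def)
      have sa: "a \<le> s" using fq nth1[OF that] by (simp add: arr_def)
      have s0: "s \<ge> 0" using sa apos by simp
      have wq: "work (T'!q) (np_par (ALG T' q)) = \<delta>"
        using nth1[OF that] by (simp add: work_def ser_def par_def)
      have aq: "np_alloc T' (ALG T') q s = np_procs (ALG T' q)"
        using fq(2) dlpos by (simp add: np_alloc_def np_finish_def wq s_def)
      have ai: "np_alloc T' (ALG T') i s = np_alloc T0 (ALG T0) i t1" if "i \<in> R1" for i
      proof -
        have "np_start (ALG T0 i) \<le> s" "s < np_finish T0 (ALG T0) i"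
          using R1prop[OF that] dle[OF that] sa slt dpos by (auto simp: a_def)
        then show ?thesis using R1prop[OF that] same[OF that] samefin[OF that]
          by (simp add: np_alloc_def)
      qed
      have qR: "q \<notin> R1" using that by (simp add: R1_def)
      have "j = (\<Sum>i\<in>R1. np_alloc T0 (ALG T0) i t1)"
        unfolding j_def by (rule sum.mono_neutral_right) (auto simp: R1_def)
      also have "\<dots> = (\<Sum>i\<in>R1. np_alloc T' (ALG T') i s)" using ai by simp
      finally have "j + 1 \<le> (\<Sum>i\<in>insert q R1. np_alloc T' (ALG T') i s)"
        using qR finR1 aq fq(2) by simp
      also have "\<dots> \<le> (\<Sum>i<length T'. np_alloc T' (ALG T') i s)"
        by (rule sum_mono2) (use that R1_def lenT' in auto)
      also have "\<dots> \<le> j" using mx[OF vT' s0] by (simp add: j_def n0_def)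
      finally show False by simp
    qed
    have algb: "real N * (d / 2) \<le> TRT_np T' (ALG T')"
    proof -
      have "real N * (d / 2) = real (card {n0..<n0+N}) * (d / 2)" by simp
      also have "\<dots> \<le> (\<Sum>i\<in>{n0..<n0+N}. np_finish T' (ALG T') i - arr (T'!i))"
      proof (rule sum_bounded_below)
        fix i assume i: "i \<in> {n0..<n0+N}"
        have "1 \<le> np_procs (ALG T' i)" using feas[OF vT'] i by (auto simp: feasible_np_def lenT')
        moreover have "work (T'!i) (np_par (ALG T' i)) = \<delta>"
          using nth1 i by (simp add: work_def ser_def par_def)
        ultimately have "np_start (ALG T' i) \<le> np_finish T' (ALG T') i"
          using dlpos by (simp add: np_finish_def)
        moreover have "arr (T'!i) = a" using nth1 i by (simp add: arr_def)
        ultimately show "d / 2 \<le> np_finish T' (ALG T') i - arr (T'!i)"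
          using block[of i] i by (simp add: a_def)
      qed
      also have "\<dots> \<le> TRT_np T' (ALG T')"
        by (rule TRT_np_ge[OF feas[OF vT'] _ vT']) (auto simp: lenT')
      finally show ?thesis .
    qed
    define S' where "S' = scale c T'"
    have vS': "valid_instance p S'" using valid_scale[OF vT' cpos] by (simp add: S'_def)
    have lenS': "length S' = n0 + N" by (simp add: S'_def lenT')
    have S0: "ser (S'!i) = c * ser (T0!i)" "arr (S'!i) = arr (T0!i)" if "i < n0" for i
      using scale_nth[of i T' c] that nth0[OF that] by (auto simp: S'_def lenT')
    have S1: "ser (S'!i) = h" "par (S'!i) = h" "arr (S'!i) = a" if "n0 \<le> i" "i < n0 + N" for i
      using scale_nth[of i T' c] that nth1[OF that] cdl by (auto simp: S'_def lenT' ser_def par_def arr_def)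
    define dopt :: np_sched where
      "dopt i = (if i < n0 then (False, 1, B + real i * M) else (False, 1, a + real (i - n0) * h))" for i
    have fin_opt0: "np_finish S' dopt i = B + real i * M + c * ser (T0!i)" if "i < n0" for i
      using that S0[OF that] by (simp add: np_finish_def dopt_def np_start_def np_par_def np_procs_def work_def)
    have st_opt0: "np_start (dopt i) = B + real i * M" if "i < n0" for i
      using that by (simp add: dopt_def np_start_def)
    have fin_opt1: "np_finish S' dopt i = a + (real (i - n0) + 1) * h" if "n0 \<le> i" "i < n0 + N" for i
      using that S1[OF that] by (simp add: np_finish_def dopt_def np_start_def np_par_def np_procs_def work_def algebra_simps)
    have st_opt1: "np_start (dopt i) = a + real (i - n0) * h" if "n0 \<le> i" for i
      using that by (simp add: dopt_def np_start_def)
    have fin1_le: "np_finish S' dopt i \<le> a + 1" if "n0 \<le> i" "i < n0 + N" for i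
    proof -
      have "real (i - n0) + 1 \<le> real N" using that by linarith
      then have "(real (i - n0) + 1) * h \<le> real N * h" using hpos by (intro mult_right_mono) auto
      then show ?thesis using fin_opt1[OF that] Nh by simp
    qed
    have B_ge: "a + 1 \<le> B + real i * M" for i
    proof -
      have "0 \<le> (\<Sum>i<n0. arr (T0!i))" using vt0 by (intro sum_nonneg) (auto simp: valid_task_def)
      moreover have "0 \<le> real i * M" using Mpos by simp
      ultimately show ?thesis by (simp add: B_def)
    qed
    have disj: "np_finish S' dopt i \<le> np_start (dopt i')"
      if "i < n0 + N" "i' < n0 + N" "(i < i' \<and> (i' < n0 \<or> n0 \<le> i)) \<or> (n0 \<le> i \<and> i' < n0)" for i i'
    proof (cases "i' < n0")
      case True
      then show ?thesis
      proof (cases "i < n0")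
        case True
        then show ?thesis using \<open>i' < n0\<close> that(3) fin_opt0 st_opt0 lin_step[of i i' M "c * ser (T0!i)" B]
          ser_le_M[OF True] Mpos by auto
      next
        case False
        then show ?thesis using fin1_le[of i] that B_ge[of i'] st_opt0[OF \<open>i' < n0\<close>] by auto
      qed
    next
      case False
      then have ii: "n0 \<le> i" "i < i'" using that(3) by auto
      have "real (i - n0) + 1 \<le> real (i' - n0)" using ii by linarith
      then have "(real (i - n0) + 1) * h \<le> real (i' - n0) * h" using hpos by (intro mult_right_mono) auto
      then show ?thesis using fin_opt1[OF ii(1) that(1)] st_opt1[of i'] False by simp
    qed
    have fopt: "feasible_np p S' dopt"
      unfolding feasible_np_def
    proof (intro conjI allI impI)
      fix i assume i: "i < length S'"
      show "arr (S'!i) \<le> np_start (dopt i)"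
      proof (cases "i < n0")
        case True then show ?thesis using S0 st_opt0 arr_le_B[OF True] B_ge[of i] Mpos
          by (simp add: B_def) (smt (verit) mult_nonneg_nonneg of_nat_0_le_iff)
      next
        case False then show ?thesis using S1[of i] st_opt1[of i] i hpos lenS' by simp
      qed
      show "1 \<le> np_procs (dopt i)" by (simp add: dopt_def np_procs_def)
      show "\<not> np_par (dopt i) \<Longrightarrow> np_procs (dopt i) = 1" by (simp add: dopt_def np_procs_def)
    next
      fix t
      have "(\<Sum>i<length S'. np_alloc S' dopt i t) \<le> 1"
      proof (rule seq_sum)
        show "\<forall>i<length S'. np_procs (dopt i) = 1" by (simp add: dopt_def np_procs_def)
        show "\<forall>i<length S'. \<forall>i'<length S'. i \<noteq> i' \<longrightarrow>
          np_finish S' dopt i \<le> np_start (dopt i') \<or> np_finish S' dopt i' \<le> np_start (dopt i)"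
        proof (intro allI impI)
          fix i i' assume "i < length S'" "i' < length S'" "i \<noteq> i'"
          then show "np_finish S' dopt i \<le> np_start (dopt i') \<or> np_finish S' dopt i' \<le> np_start (dopt i)"
          proof (cases "i < i'")
            case True
            then show ?thesis using \<open>i < length S'\<close> \<open>i' < length S'\<close> lenS'
              disj[of i i'] disj[of i' i] by (cases "i < n0"; cases "i' < n0") simp_all
          next
            case False
            then have "i' < i" using \<open>i \<noteq> i'\<close> by simp
            then show ?thesis using \<open>i < length S'\<close> \<open>i' < length S'\<close> lenS'
              disj[of i i'] disj[of i' i] by (cases "i < n0"; cases "i' < n0") simp_all
          qed
        qed
      qed
      then show "(\<Sum>i<length S'. np_alloc S' dopt i t) \<le> p" using p1 by simp
    qed
    have fs: "feasible_sched p S' (\<lambda>i. np_par (dopt i)) (np_alloc S' dopt) (np_finish S' dopt)"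
      by (rule np_to_sched[OF vS' fopt])
    have optval: "TRT S' (np_finish S' dopt) \<le> C0 + 1"
    proof -
      have "TRT S' (np_finish S' dopt) = (\<Sum>i\<in>{0..<n0}. np_finish S' dopt i - arr (S'!i))
            + (\<Sum>i\<in>{n0..<n0+N}. np_finish S' dopt i - arr (S'!i))"
        unfolding TRT_def lenS' by (simp add: sum.atLeastLessThan_concat lessThan_atLeast0)
      also have "(\<Sum>i\<in>{0..<n0}. np_finish S' dopt i - arr (S'!i)) = C0"
        unfolding C0_def lessThan_atLeast0 by (intro sum.cong) (auto simp: fin_opt0 S0)
      also have "(\<Sum>i\<in>{n0..<n0+N}. np_finish S' dopt i - arr (S'!i)) \<le> real (card {n0..<n0+N}) * (real N * h)"
      proof (rule sum_bounded_above)
        fix i assume i: "i \<in> {n0..<n0+N}"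
        have "real (i - n0) + 1 \<le> real N" using i by auto
        then have "(real (i - n0) + 1) * h \<le> real N * h" using hpos by (intro mult_right_mono) auto
        then show "np_finish S' dopt i - arr (S'!i) \<le> real N * h" using fin_opt1[of i] S1[of i] i by auto
      qed
      also have "real (card {n0..<n0+N}) * (real N * h) = 1" using NNh by simp
      finally show ?thesis by simp
    qed
    define Sset where "Sset = {TRT S' f | m a f. feasible_sched p S' m a f}"
    have inS: "TRT S' (np_finish S' dopt) \<in> Sset" unfolding Sset_def using fs by blast
    have lowb: "h / real p \<le> x" if "x \<in> Sset" for x
    proof -
      obtain m al f where x: "x = TRT S' f" and fsx: "feasible_sched p S' m al f"
        using \<open>x \<in> Sset\<close> unfolding Sset_def by blast
      have n0i: "n0 < length S'" using lenS' N1 by simp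
      have "work (S'!n0) (m n0) = h" using S1[of n0] N1 by (simp add: work_def)
      then have "h \<le> real p * (f n0 - a)" using sched_lower[OF fsx n0i] S1[of n0] N1 by simp
      then have "h / real p \<le> f n0 - a" using p1 by (simp add: field_simps)
      also have "\<dots> \<le> TRT S' f" using TRT_ge_term[OF fsx n0i] S1[of n0] N1 by simp
      finally show ?thesis using x by simp
    qed
    have bdd: "bdd_below Sset" using lowb by (auto simp: bdd_below_def)
    have opt_le: "TRT_OPT p S' \<le> C0 + 1"
      unfolding TRT_OPT_def Sset_def[symmetric] using cInf_lower[OF inS bdd] optval by simp
    have opt_gt: "TRT_OPT p S' > 0"
    proof -
      have "h / real p \<le> TRT_OPT p S'"
        unfolding TRT_OPT_def Sset_def[symmetric] using inS lowb by (intro cInf_greatest) auto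
      moreover have "h / real p > 0" using hpos p1 by simp
      ultimately show ?thesis by simp
    qed
    have "1 * real R * TRT_OPT p S' \<le> real R * (C0 + 1)"
      using opt_le by (simp add: mult_left_mono)
    also have "\<dots> \<le> real N * (d / 2)"
      using Nbig dpos by (simp add: field_simps)
    also have "\<dots> \<le> TRT_np T' (ALG T')" by (rule algb)
    finally show "\<exists>T. valid_instance p T \<and> TRT_OPT p (scale c T) > 0 \<and>
            TRT_np T (ALG T) \<ge> 1 * real R * TRT_OPT p (scale c T)"
      using vT' opt_gt unfolding S'_def by blast
  qed simp
qed

end
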